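(* Let $T_3(n)=2^n-1$ for all integers $n\ge 0$. Define $T_4:\mathbb{Z}_{\ge 0}\to\mathbb{Z}_{\ge 0}$ by $T_4(0)=0$, $T_4(1)=1$, and for $n\ge 2$, \[ T_4(n)=\min_{1\le k<n}\bigl(2\,T_4(n-k)+T_3(k)\bigr). \] For $n\ge 1$ define the balanced Frame--Stewart cost \[ FS_{\lfloor n/2\rfloor}(n)=2\,T_4(\lfloor n/2\rfloor)+T_3\bigl(n-\lfloor n/2\rfloor\bigr). \] Then $FS_{\lfloor n/2\rfloor}(n)=T_4(n)$ for every $1\le n\le 8$, and $FS_{\lfloor n/2\rfloor}(n)>T_4(n)$ for every $n\ge 9$.
   Context: $T_3(n)$ is the minimum number of moves for the three-peg Tower of Hanoi with $n$ discs, and $T_4(n)$ is the minimum number of moves for the four-peg Tower of Hanoi with $n$ discs; the latter is given by the Frame--Stewart recurrence stated in the claim (optimality of this recurrence for four pegs is a known result of Bousch). $FS_{\lfloor n/2\rfloor}(n)$ is the cost of the Frame--Stewart strategy that parks $\lfloor n/2\rfloor$ discs using four pegs, moves the remaining $n-\lfloor n/2\rfloor$ discs with three pegs, and then rebuilds the parked discs. *)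

theory Defs
  imports Main
begin

definition T3 :: "nat \<Rightarrow> nat" where
  "T3 n = 2 ^ n - 1"

function T4 :: "nat \<Rightarrow> nat" where
  "T4 n = (if n = 0 then 0 else if n = 1 then 1
           else Min ((\<lambda>k. 2 * T4 (n - k) + T3 k) ` {1..<n}))"
  by auto
termination
  by (relation "measure id") auto

definition FS_balanced :: "nat \<Rightarrow> nat" where
  "FS_balanced n = 2 * T4 (n div 2) + T3 (n - n div 2)"

end

theory Submission
  imports Defs
begin

declare T4.simps[simp del]

lemma T4_eq: "n \<ge> 2 \<Longrightarrow> T4 n = Min (set (map (\<lambda>k. 2 * T4 (n - k) + T3 k) [1..<n]))"
  by (subst T4.simps) simp
lemma T4_0: "T4 0 = 0" by (simp add: T4.simps)
lemma T4_1: "T4 1 = 1" by (simp add: T4.simps)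
lemma T4_1s: "T4 (Suc 0) = 1" by (simp add: T4.simps)
lemma T4_2: "T4 2 = 3" by (simp only: T4_eq) (simp del: set_map set_upt add: upt_rec T3_def T4_1s T4_1)
lemma T4_3: "T4 3 = 5" by (simp only: T4_eq) (simp del: set_map set_upt add: upt_rec T3_def T4_1s T4_1 T4_2)
lemma T4_4: "T4 4 = 9" by (simp only: T4_eq) (simp del: set_map set_upt add: upt_rec T3_def T4_1s T4_1 T4_2 T4_3)
lemma T4_5: "T4 5 = 13" by (simp only: T4_eq) (simp del: set_map set_upt add: upt_rec T3_def T4_1s T4_1 T4_2 T4_3 T4_4)
lemma T4_6: "T4 6 = 17" by (simp only: T4_eq) (simp del: set_map set_upt add: upt_rec T3_def T4_1s T4_1 T4_2 T4_3 T4_4 T4_5)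
lemma T4_7: "T4 7 = 25" by (simp only: T4_eq) (simp del: set_map set_upt add: upt_rec T3_def T4_1s T4_1 T4_2 T4_3 T4_4 T4_5 T4_6)
lemma T4_8: "T4 8 = 33" by (simp only: T4_eq) (simp del: set_map set_upt add: upt_rec T3_def T4_1s T4_1 T4_2 T4_3 T4_4 T4_5 T4_6 T4_7)
lemma T4_9: "T4 9 = 41" by (simp only: T4_eq) (simp del: set_map set_upt add: upt_rec T3_def T4_1s T4_1 T4_2 T4_3 T4_4 T4_5 T4_6 T4_7 T4_8)
lemma T4_10: "T4 10 = 49" by (simp only: T4_eq) (simp del: set_map set_upt add: upt_rec T3_def T4_1s T4_1 T4_2 T4_3 T4_4 T4_5 T4_6 T4_7 T4_8 T4_9)
lemma T4_11: "T4 11 = 65" by (simp only: T4_eq) (simp del: set_map set_upt add: upt_rec T3_def T4_1s T4_1 T4_2 T4_3 T4_4 T4_5 T4_6 T4_7 T4_8 T4_9 T4_10)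
lemma T4_12: "T4 12 = 81" by (simp only: T4_eq) (simp del: set_map set_upt add: upt_rec T3_def T4_1s T4_1 T4_2 T4_3 T4_4 T4_5 T4_6 T4_7 T4_8 T4_9 T4_10 T4_11)
lemma T4_13: "T4 13 = 97" by (simp only: T4_eq) (simp del: set_map set_upt add: upt_rec T3_def T4_1s T4_1 T4_2 T4_3 T4_4 T4_5 T4_6 T4_7 T4_8 T4_9 T4_10 T4_11 T4_12)
lemma T4_14: "T4 14 = 113" by (simp only: T4_eq) (simp del: set_map set_upt add: upt_rec T3_def T4_1s T4_1 T4_2 T4_3 T4_4 T4_5 T4_6 T4_7 T4_8 T4_9 T4_10 T4_11 T4_12 T4_13)
lemma T4_15: "T4 15 = 129" by (simp only: T4_eq) (simp del: set_map set_upt add: upt_rec T3_def T4_1s T4_1 T4_2 T4_3 T4_4 T4_5 T4_6 T4_7 T4_8 T4_9 T4_10 T4_11 T4_12 T4_13 T4_14)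
lemma T4_16: "T4 16 = 161" by (simp only: T4_eq) (simp del: set_map set_upt add: upt_rec T3_def T4_1s T4_1 T4_2 T4_3 T4_4 T4_5 T4_6 T4_7 T4_8 T4_9 T4_10 T4_11 T4_12 T4_13 T4_14 T4_15)
lemma T4_17: "T4 17 = 193" by (simp only: T4_eq) (simp del: set_map set_upt add: upt_rec T3_def T4_1s T4_1 T4_2 T4_3 T4_4 T4_5 T4_6 T4_7 T4_8 T4_9 T4_10 T4_11 T4_12 T4_13 T4_14 T4_15 T4_16)

lemma T4_le: "1 \<le> k \<Longrightarrow> k < n \<Longrightarrow> T4 n \<le> 2 * T4 (n - k) + T3 k"
  by (subst T4.simps) (auto intro!: Min_le)

lemma big: "n \<ge> 14 \<Longrightarrow> T4 n + 15 \<le> 2 ^ ((n + 1) div 2)"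
proof (induction n rule: less_induct)
  case (less n)
  show ?case
  proof (cases "n \<le> 17")
    case True
    with less.prems have "n = 14 \<or> n = 15 \<or> n = 16 \<or> n = 17" by auto
    then show ?thesis by (auto simp: T4_14 T4_15 T4_16 T4_17)
  next
    case False
    have ih: "T4 (n - 4) + 15 \<le> 2 ^ ((n - 4 + 1) div 2)" using less.IH[of "n - 4"] False by auto
    have "T4 n \<le> 2 * T4 (n - 4) + 15" using T4_le[of 4 n] False by (simp add: T3_def)
    hence "T4 n + 15 \<le> 2 * 2 ^ ((n - 4 + 1) div 2)" using ih by linarith
    also have "\<dots> \<le> 2 ^ ((n + 1) div 2)"
    proof -
      have "Suc ((n - 4 + 1) div 2) \<le> (n + 1) div 2" using False by auto
      hence "(2::nat) ^ Suc ((n - 4 + 1) div 2) \<le> 2 ^ ((n + 1) div 2)" by (rule power_increasing) simp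
      thus ?thesis by simp
    qed
    finally show ?thesis .
  qed
qed

theorem lemma3:
  shows "(\<forall>n::nat. 1 \<le> n \<and> n \<le> 8 \<longrightarrow> FS_balanced n = T4 n)
       \<and> (\<forall>n::nat. 9 \<le> n \<longrightarrow> FS_balanced n > T4 n)"
proof (intro conjI allI impI)
  fix n :: nat assume "1 \<le> n \<and> n \<le> 8"
  hence "n \<in> {1,2,3,4,5,6,7,8}" by auto
  thus "FS_balanced n = T4 n"
    by (auto simp: FS_balanced_def T3_def T4_0 T4_1s T4_2 T4_3 T4_4 T4_5 T4_6 T4_7 T4_8)
next
  fix n :: nat assume n9: "9 \<le> n"
  show "FS_balanced n > T4 n"
  proof (cases "n \<le> 13")
    case True
    hence "n \<in> {9,10,11,12,13}" using n9 by auto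
    thus ?thesis
      by (auto simp: FS_balanced_def T3_def T4_1s T4_2 T4_3 T4_4 T4_5 T4_6 T4_9 T4_10 T4_11 T4_12 T4_13)
  next
    case False
    have "n - n div 2 = (n + 1) div 2" by auto
    hence "FS_balanced n \<ge> 2 ^ ((n + 1) div 2) - 1" by (simp add: FS_balanced_def T3_def)
    moreover have "T4 n + 15 \<le> 2 ^ ((n + 1) div 2)" using big False by auto
    ultimately show ?thesis by linarith
  qed
qed

end
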